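(* Let $\Delta\ge 1$ be an integer, $c>0$, $n\ge 0$, and let $s_1,\dots,s_\Delta$ be nonnegative numbers with $s_1 \le s_2 \le \dots \le s_\Delta$ and $\sum_{i=1}^{\Delta} s_i = n$. Then the quantity $\sum_{i=1}^{\Delta} (\Delta + i)\, c\sqrt{s_i}$, over all such tuples, is minimized when $s_\Delta = n$ (and hence $s_1=\dots=s_{\Delta-1}=0$). *)

theory Defs
  imports Complex_Main
begin

definition admissible :: "nat \<Rightarrow> real \<Rightarrow> (nat \<Rightarrow> real) \<Rightarrow> bool" where
  "admissible \<Delta> n s \<longleftrightarrow>
     (\<forall>i\<in>{1..\<Delta>}. s i \<ge> 0) \<and>
     (\<forall>i\<in>{1..<\<Delta>}. s i \<le> s (Suc i)) \<and>
     (\<Sum>i=1..\<Delta>. s i) = n"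

definition objective :: "nat \<Rightarrow> real \<Rightarrow> (nat \<Rightarrow> real) \<Rightarrow> real" where
  "objective \<Delta> c s = (\<Sum>i=1..\<Delta>. real (\<Delta> + i) * c * sqrt (s i))"

end

theory Submission
  imports Defs
begin

lemma mono_le_top:
  fixes s :: "nat \<Rightarrow> real"
  assumes "\<forall>i\<in>{1..<D}. s i \<le> s (Suc i)"
  shows "\<And>i. 1 \<le> i \<Longrightarrow> i \<le> D \<Longrightarrow> s i \<le> s D"
proof -
  have "\<forall>i. 1 \<le> i \<longrightarrow> i + k = D \<longrightarrow> s i \<le> s D" for k
  proof (induction k)
    case 0 then show ?case by auto
  next
    case (Suc k)
    show ?case
    proof (intro allI impI)
      fix i assume i: "1 \<le> i" "i + Suc k = D"
      have "s i \<le> s (Suc i)" using assms i by auto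
      also have "\<dots> \<le> s D" using Suc i by auto
      finally show "s i \<le> s D" .
    qed
  qed
  then show "\<And>i. 1 \<le> i \<Longrightarrow> i \<le> D \<Longrightarrow> s i \<le> s D"
    by (metis le_add_diff_inverse)
qed

lemma key:
  fixes D :: nat and n :: real and s :: "nat \<Rightarrow> real"
  assumes D: "D \<ge> 1" and adm: "admissible D n s"
  shows "2 * real D * sqrt n \<le> (\<Sum>i=1..D. real (D + i) * sqrt (s i))"
proof -
  have nn: "\<And>i. i \<in> {1..D} \<Longrightarrow> s i \<ge> 0" and mo: "\<forall>i\<in>{1..<D}. s i \<le> s (Suc i)"
    and sm: "(\<Sum>i=1..D. s i) = n" using adm unfolding admissible_def by auto
  define M where "M = s D"
  have le: "\<And>i. i \<in> {1..D} \<Longrightarrow> s i \<le> M" using mono_le_top[OF mo] M_def by auto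
  have M0: "M \<ge> 0" using nn D M_def by auto
  have split1: "{1..D} = insert D {1..<D}" using D by auto
  have S: "(\<Sum>i=1..D. real (D + i) * sqrt (s i)) = (\<Sum>i=1..<D. real (D + i) * sqrt (s i)) + 2 * real D * sqrt M"
    unfolding split1 M_def by (simp add: sum.insert)
  have N: "n = (\<Sum>i=1..<D. s i) + M"
    using sm unfolding split1 M_def by (simp add: sum.insert)
  show ?thesis
  proof (cases "M = 0")
    case True
    then have "\<And>i. i \<in> {1..<D} \<Longrightarrow> s i = 0" using le nn
      by (meson atLeastLessThan_iff atLeastAtMost_iff less_imp_le order_antisym)
    then have "n = 0" using N True by simp
    moreover have "0 \<le> (\<Sum>i=1..D. real (D + i) * sqrt (s i))"
      by (intro sum_nonneg) (simp add: nn)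
    ultimately show ?thesis by simp
  next
    case False
    then have Mp: "M > 0" using M0 by simp
    have sq: "sqrt M > 0" using Mp by simp
    have each: "real D * s i / sqrt M \<le> real (D + i) * sqrt (s i)" if i: "i \<in> {1..<D}" for i
    proof -
      have si: "0 \<le> s i" "s i \<le> M" using nn le i by auto
      have "s i = sqrt (s i) * sqrt (s i)" using si by simp
      also have "\<dots> \<le> sqrt (s i) * sqrt M"
        using si by (intro mult_left_mono) (auto simp: real_sqrt_le_iff)
      finally have "s i / sqrt M \<le> sqrt (s i)" using sq by (simp add: divide_le_eq)
      then have "real D * (s i / sqrt M) \<le> real D * sqrt (s i)" by (intro mult_left_mono) auto
      also have "\<dots> \<le> real (D + i) * sqrt (s i)" using si by (intro mult_right_mono) auto
      finally show ?thesis by simp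
    qed
    have "(\<Sum>i=1..<D. real D * s i / sqrt M) \<le> (\<Sum>i=1..<D. real (D + i) * sqrt (s i))"
      by (rule sum_mono) (rule each)
    moreover have "(\<Sum>i=1..<D. real D * s i / sqrt M) = real D * (n - M) / sqrt M"
      using N by (simp add: sum_divide_distrib[symmetric] sum_distrib_left[symmetric])
    ultimately have A: "real D * (n - M) / sqrt M + 2 * real D * sqrt M \<le> (\<Sum>i=1..D. real (D + i) * sqrt (s i))"
      using S by linarith
    have "(\<Sum>i=1..<D. s i) \<ge> 0" using nn by (intro sum_nonneg) auto
    then have n0: "n \<ge> 0" using N M0 by linarith
    have "2 * sqrt n * sqrt M \<le> n + M"
    proof -
      have "0 \<le> (sqrt n - sqrt M)^2" by simp
      then show ?thesis using n0 M0 by (simp add: power2_eq_square algebra_simps)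
    qed
    then have "2 * sqrt n \<le> (n - M) / sqrt M + 2 * sqrt M"
    proof -
      have "sqrt M * sqrt M = M" using M0 by simp
      then have e: "sqrt M * (sqrt M * 2) = 2 * M" by simp
      show ?thesis using \<open>2 * sqrt n * sqrt M \<le> n + M\<close> sq
        apply (simp add: field_simps) using e by linarith
    qed
    then have "real D * (2 * sqrt n) \<le> real D * ((n - M) / sqrt M + 2 * sqrt M)"
      by (intro mult_left_mono) auto
    then show ?thesis using A by (simp add: algebra_simps)
  qed
qed

theorem mainTheorem2:
  fixes \<Delta> :: nat and c n :: real
  assumes "\<Delta> \<ge> 1" and "c > 0" and "n \<ge> 0"
  defines "s0 \<equiv> (\<lambda>i::nat. if i = \<Delta> then n else 0)"
  shows "admissible \<Delta> n s0 \<and>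
         (\<forall>s. admissible \<Delta> n s \<longrightarrow> objective \<Delta> c s0 \<le> objective \<Delta> c s)"
proof -
  have split1: "{1..\<Delta>} = insert \<Delta> {1..<\<Delta>}" using assms(1) by auto
  have adm: "admissible \<Delta> n s0"
    unfolding admissible_def s0_def using assms(1,3)
    by (auto simp: split1 sum.insert)
  have obj0: "objective \<Delta> c s0 = c * (2 * real \<Delta> * sqrt n)"
    unfolding objective_def s0_def split1 by (simp add: sum.insert)
  have "objective \<Delta> c s = c * (\<Sum>i=1..\<Delta>. real (\<Delta> + i) * sqrt (s i))" for s
    unfolding objective_def by (simp add: sum_distrib_left algebra_simps)
  then show ?thesis using adm obj0 key[OF assms(1)] assms(2)
    by (simp add: mult_left_mono)
qed

end
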